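(* Let $\mathcal{P} \subseteq \{2,3,4,\dots\}$ be nonempty and suppose $\rho(\mathcal{P})$ (defined in the context) exists. Then for every integer $n \geq 1$, $$H(n,\mathcal{P}) \leq n^{\rho(\mathcal{P})}.$$
   Context: For $\mathcal{P} \subseteq \{2,3,\dots\}$, $H(n,\mathcal{P})$ denotes the number of ordered factorizations of $n$ into factors that all belong to $\mathcal{P}$: $H(1,\mathcal{P})=1$ and, for $n\ge 2$, $H(n,\mathcal{P})=\sum_{k\ge1} \#\{(d_1,\dots,d_k): d_1\cdots d_k=n,\ d_i\in\mathcal{P}\}$. Equivalently, $H(n,\mathcal{P})=\sum_{d\mid n,\ d\in\mathcal{P}} H(n/d,\mathcal{P})$ for $n\ge2$. Let $\zeta_\mathcal{P}(s)=\sum_{m\in\mathcal{P}} m^{-s}$ with abscissa of convergence $\sigma_\mathcal{P}$ ($\sigma_\mathcal{P}=-\infty$ if $\mathcal{P}$ is finite). For real $s\ge 0$ in the region of convergence, $\zeta_\mathcal{P}(s)$ is strictly decreasing and tends to $0$ as $s\to\infty$; $\rho(\mathcal{P})$ denotes the unique real $s\geq 0$ (with $s>\sigma_\mathcal{P}$, or at which the series converges) such that $\zeta_\mathcal{P}(s)=1$. *)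

theory Defs
  imports "HOL-Analysis.Analysis"
begin

definition H :: "nat \<Rightarrow> nat set \<Rightarrow> nat" where
  "H n P = card {ds :: nat list. set ds \<subseteq> P \<and> prod_list ds = n}"

definition zetaP :: "nat set \<Rightarrow> real \<Rightarrow> real" where
  "zetaP P s = (\<Sum>\<^sub>\<infinity>m\<in>P. real m powr (-s))"

definition rho_exists :: "nat set \<Rightarrow> bool" where
  "rho_exists P \<longleftrightarrow> (\<exists>s\<ge>0. (\<lambda>m. real m powr (-s)) summable_on P \<and> zetaP P s = 1)"

definition rho :: "nat set \<Rightarrow> real" where
  "rho P = (THE s. s \<ge> 0 \<and> (\<lambda>m. real m powr (-s)) summable_on P \<and> zetaP P s = 1)"

end

theory Submission
  imports Defs
begin

definition S :: "nat \<Rightarrow> nat set \<Rightarrow> nat list set" where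
  "S n P = {ds :: nat list. set ds \<subseteq> P \<and> prod_list ds = n}"

lemma dvd_prod_list': "(x::nat) \<in> set ds \<Longrightarrow> x dvd prod_list ds"
  by (induction ds) auto

lemma prod_list_ge_pow:
  fixes ds :: "nat list"
  assumes "set ds \<subseteq> {2..}" shows "2 ^ length ds \<le> prod_list ds"
  using assms
proof (induction ds)
  case Nil then show ?case by simp
next
  case (Cons a ds)
  then have "2 \<le> a" "2 ^ length ds \<le> prod_list ds" by auto
  then show ?case by (simp add: mult_mono)
qed

lemma S_finite:
  assumes "P \<subseteq> {2..}" "n \<ge> 1" shows "finite (S n P)"
proof -
  have "S n P \<subseteq> {xs. set xs \<subseteq> {..n} \<and> length xs \<le> n}"
  proof
    fix ds assume "ds \<in> S n P"
    then have ds: "set ds \<subseteq> P" "prod_list ds = n" by (auto simp: S_def)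
    have "\<forall>x\<in>set ds. x \<le> n"
    proof
      fix x assume "x \<in> set ds"
      then have "x dvd n" using ds(2) by (metis dvd_prod_list')
      then show "x \<le> n" using assms(2) by (simp add: dvd_imp_le)
    qed
    moreover have "2 ^ length ds \<le> n" using prod_list_ge_pow[of ds] ds assms(1) by auto
    then have "length ds < n" by (metis less_exp order.strict_trans2)
    ultimately show "ds \<in> {xs. set xs \<subseteq> {..n} \<and> length xs \<le> n}" by auto
  qed
  then show ?thesis using finite_lists_length_le[of "{..n}" n] finite_subset by blast
qed

lemma zeta_strict:
  fixes P :: "nat set"
  assumes "P \<subseteq> {2..}" "P \<noteq> {}" "s1 < s2"
    and "(\<lambda>m. real m powr (-s1)) summable_on P" "(\<lambda>m. real m powr (-s2)) summable_on P"
  shows "zetaP P s2 < zetaP P s1"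
proof -
  obtain m0 where m0: "m0 \<in> P" using assms(2) by auto
  define f1 where "f1 = (\<lambda>m. real m powr (-s1))"
  define f2 where "f2 = (\<lambda>m. real m powr (-s2))"
  define Q where "Q = P - {m0}"
  have PQ: "P = insert m0 Q" "m0 \<notin> Q" using m0 Q_def by auto
  have s1Q: "f1 summable_on Q" unfolding Q_def f1_def
    by (rule summable_on_subset[OF assms(4)]) auto
  have s2Q: "f2 summable_on Q" unfolding Q_def f2_def
    by (rule summable_on_subset[OF assms(5)]) auto
  have z1: "zetaP P s1 = f1 m0 + infsum f1 Q"
    unfolding zetaP_def f1_def[symmetric] PQ(1) using s1Q PQ(2) by (rule infsum_insert)
  have z2: "zetaP P s2 = f2 m0 + infsum f2 Q"
    unfolding zetaP_def f2_def[symmetric] PQ(1) using s2Q PQ(2) by (rule infsum_insert)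
  have le: "f2 m \<le> f1 m" if "m \<in> P" for m
  proof -
    have "m \<ge> 2" using that assms(1) by auto
    then show ?thesis unfolding f1_def f2_def using assms(3) by (intro powr_mono) auto
  qed
  have lt: "f2 m0 < f1 m0"
  proof -
    have "m0 \<ge> 2" using m0 assms(1) by auto
    then show ?thesis unfolding f1_def f2_def using assms(3) by (intro powr_less_mono) auto
  qed
  have "infsum f2 Q \<le> infsum f1 Q"
    using s1Q s2Q le by (intro infsum_mono) (auto simp: Q_def)
  then show ?thesis using z1 z2 lt by simp
qed

lemma rho_props:
  assumes "P \<subseteq> {2..}" "P \<noteq> {}" "rho_exists P"
  shows "rho P \<ge> 0 \<and> (\<lambda>m. real m powr (-rho P)) summable_on P \<and> zetaP P (rho P) = 1"
proof -
  obtain s where s: "s \<ge> 0 \<and> (\<lambda>m. real m powr (-s)) summable_on P \<and> zetaP P s = 1"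
    using assms(3) unfolding rho_exists_def by blast
  have "\<And>t. t \<ge> 0 \<and> (\<lambda>m. real m powr (-t)) summable_on P \<and> zetaP P t = 1 \<Longrightarrow> t = s"
  proof -
    fix t assume t: "t \<ge> 0 \<and> (\<lambda>m. real m powr (-t)) summable_on P \<and> zetaP P t = 1"
    show "t = s"
    proof (rule ccontr)
      assume "t \<noteq> s"
      then consider "t < s" | "s < t" by linarith
      then show False
      proof cases
        case 1
        then have "zetaP P s < zetaP P t" using zeta_strict[OF assms(1,2), of t s] s t by blast
        then show False using s t by linarith
      next
        case 2
        then have "zetaP P t < zetaP P s" using zeta_strict[OF assms(1,2), of s t] s t by blast
        then show False using s t by linarith
      qed
    qed
  qed
  then have "rho P = s" unfolding rho_def using s by (rule the_equality[rotated]) (use s in blast)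
  then show ?thesis using s by simp
qed

lemma S_one: assumes "P \<subseteq> {2..}" shows "S 1 P = {[]}"
proof -
  have "ds = []" if "set ds \<subseteq> P" "prod_list ds = 1" for ds
  proof (cases ds)
    case (Cons a r)
    then have "a dvd 1" using that(2) by (metis dvd_prod_list' list.set_intros(1))
    moreover have "a \<ge> 2" using Cons that(1) assms by auto
    ultimately show ?thesis by simp
  qed simp
  then show ?thesis by (auto simp: S_def)
qed

lemma S_split:
  assumes "P \<subseteq> {2..}" "n \<ge> 2"
  shows "S n P \<subseteq> (\<Union>d\<in>{d\<in>P. d dvd n}. Cons d ` S (n div d) P)"
proof
  fix ds assume "ds \<in> S n P"
  then have ds: "set ds \<subseteq> P" "prod_list ds = n" by (auto simp: S_def)
  then obtain d r where dr: "ds = d # r" using assms(2) by (cases ds) auto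
  have "d > 0" using dr ds assms(1) by auto
  then have "prod_list r = n div d" using ds(2) dr by auto
  moreover have "d \<in> P" "d dvd n" "set r \<subseteq> P" using dr ds by auto
  ultimately have "r \<in> S (n div d) P" "d \<in> {d\<in>P. d dvd n}" by (auto simp: S_def)
  then show "ds \<in> (\<Union>d\<in>{d\<in>P. d dvd n}. Cons d ` S (n div d) P)"
    using dr by blast
qed

theorem lemma2p1:
  fixes P :: "nat set" and n :: nat
  assumes "P \<subseteq> {2..}" and "P \<noteq> {}" and "rho_exists P" and "n \<ge> 1"
  shows "real (H n P) \<le> real n powr rho P"
proof -
  define r where "r = rho P"
  have r: "r \<ge> 0" "(\<lambda>m. real m powr (-r)) summable_on P" "zetaP P r = 1"
    using rho_props[OF assms(1-3)] r_def by auto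
  have HS: "H m P = card (S m P)" for m by (simp add: H_def S_def)
  show ?thesis using assms(4) unfolding r_def[symmetric]
  proof (induction n rule: less_induct)
    case (less n)
    show ?case
    proof (cases "n = 1")
      case True
      then show ?thesis using S_one[OF assms(1)] HS by simp
    next
      case False
      then have n2: "n \<ge> 2" using less.prems by auto
      define D where "D = {d\<in>P. d dvd n}"
      have Dfin: "finite D" unfolding D_def
        by (rule finite_subset[of _ "{..n}"]) (use n2 in \<open>auto intro: dvd_imp_le\<close>)
      have Dpos: "d \<ge> 2" "d dvd n" if "d \<in> D" for d using that assms(1) D_def by auto
      have fin: "finite (S (n div d) P)" if dD: "d \<in> D" for d
      proof -
        obtain k where k: "n = d * k" using Dpos[OF dD] by (auto elim!: dvdE)
        then have "k \<noteq> 0" using n2 by (metis mult_0_right not_numeral_le_zero)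
        then show ?thesis using k Dpos[OF dD] by (intro S_finite assms(1)) simp
      qed
      have "card (S n P) \<le> card (\<Union>d\<in>D. Cons d ` S (n div d) P)"
        using S_split[OF assms(1) n2] Dfin fin unfolding D_def[symmetric]
        by (intro card_mono) auto
      also have "\<dots> \<le> (\<Sum>d\<in>D. card (Cons d ` S (n div d) P))"
        using Dfin by (rule card_UN_le)
      also have "\<dots> = (\<Sum>d\<in>D. H (n div d) P)"
        by (intro sum.cong refl) (simp add: HS card_image)
      finally have "real (H n P) \<le> (\<Sum>d\<in>D. real (H (n div d) P))"
        unfolding HS by (metis of_nat_le_iff of_nat_sum)
      also have "\<dots> \<le> (\<Sum>d\<in>D. real (n div d) powr r)"
      proof (intro sum_mono less.IH)
        fix d assume d: "d \<in> D"
        show "n div d < n" using Dpos[OF d] n2 by simp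
        obtain k where k: "n = d * k" using Dpos[OF d] by (auto elim!: dvdE)
        then have "k \<noteq> 0" using n2 by (metis mult_0_right not_numeral_le_zero)
        then show "1 \<le> n div d" using k Dpos[OF d] by simp
      qed
      also have "\<dots> = (\<Sum>d\<in>D. real n powr r * real d powr (-r))"
      proof (intro sum.cong refl)
        fix d assume d: "d \<in> D"
        have "real (n div d) = real n / real d" using Dpos[OF d] by (simp add: real_of_nat_div)
        then show "real (n div d) powr r = real n powr r * real d powr (-r)"
          by (simp add: powr_divide powr_minus_divide)
      qed
      also have "\<dots> = real n powr r * (\<Sum>d\<in>D. real d powr (-r))"
        by (simp add: sum_distrib_left)
      also have "\<dots> \<le> real n powr r * zetaP P r"
        unfolding zetaP_def using r(2) Dfin
        by (intro mult_left_mono finite_sum_le_infsum) (auto simp: D_def)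
      finally show ?thesis using r(3) by simp
    qed
  qed
qed

end
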